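(* Let $1\le p\le\infty$, let $m\ge1$, and let $L:(\ell_p)^m\to\mathbb{R}$ be a continuous symmetric $m$-linear form on real $\ell_p$ with associated homogeneous polynomial $\widehat L$. Let $x_1,\ldots,x_n$ be norm-one vectors in $\ell_p$ with pairwise disjoint supports and let $k_1,\ldots,k_n$ be non-negative integers with $k_1+\cdots+k_n=m$. Then \[\frac{|L(x_1^{k_1}\cdots x_n^{k_n})|}{\|\widehat L\|}\le \begin{cases} \min\left\{\dfrac{k_1^{k_1}\cdots k_n^{k_n}}{m!}\,n^{m/p},\ \dfrac{p\,2^{p/2}\,\Gamma(p/2)\,m^{p/2}}{m!}\right\}, & \text{if } p\ge m,\\[3mm] \min\left\{\dfrac{k_1^{k_1}\cdots k_n^{k_n}}{m!}\,n^{m/p},\ \dfrac{n^{(m-p)/p}\,m\,2^{m/2}\,\Gamma(m/2)\,m^{m/2}}{m!}\right\}, & \text{if } p< m. \end{cases}\]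
   Context: $\widehat{L}(x)=L(x,\ldots,x)$, $\|\widehat{L}\|=\sup\{|\widehat{L}(x)|:\|x\|_p\le1\}$; $L(x_1^{k_1}\cdots x_n^{k_n})$ means $L$ evaluated at the $m$-tuple in which each $x_i$ appears $k_i$ times. The support of $x=(x(j))_j\in\ell_p$ is $\{j:x(j)\neq0\}$. Conventions: $0^0=1$; $n^{m/p}=1$ when $p=\infty$; for $p=\infty$ the second term in the minimum is interpreted as $+\infty$. *)

theory Defs
  imports "HOL-Analysis.Analysis" "HOL-Library.Multiset"
begin

definition in_lp :: "ereal \<Rightarrow> (nat \<Rightarrow> real) \<Rightarrow> bool" where
  "in_lp p x = (if p = \<infinity> then bdd_above (range (\<lambda>j. \<bar>x j\<bar>))
                else summable (\<lambda>j. \<bar>x j\<bar> powr real_of_ereal p))"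

definition lp_norm :: "ereal \<Rightarrow> (nat \<Rightarrow> real) \<Rightarrow> real" where
  "lp_norm p x = (if p = \<infinity> then (SUP j. \<bar>x j\<bar>)
                  else (\<Sum>j. \<bar>x j\<bar> powr real_of_ereal p) powr (1 / real_of_ereal p))"

definition supp :: "(nat \<Rightarrow> real) \<Rightarrow> nat set" where
  "supp x = {j. x j \<noteq> 0}"

text \<open>An m-linear form is modelled as a function on lists of length m of ell_p vectors.\<close>

definition multilinear_lp :: "ereal \<Rightarrow> nat \<Rightarrow> ((nat \<Rightarrow> real) list \<Rightarrow> real) \<Rightarrow> bool" where
  "multilinear_lp p m L = (\<forall>xs i u v (a::real) (b::real).
     length xs = m \<and> (\<forall>y\<in>set xs. in_lp p y) \<and> i < m \<and> in_lp p u \<and> in_lp p v \<longrightarrow>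
     L (xs[i := (\<lambda>j. a * u j + b * v j)]) = a * L (xs[i := u]) + b * L (xs[i := v]))"

definition symmetric_lp :: "ereal \<Rightarrow> nat \<Rightarrow> ((nat \<Rightarrow> real) list \<Rightarrow> real) \<Rightarrow> bool" where
  "symmetric_lp p m L = (\<forall>xs ys. length xs = m \<and> (\<forall>y\<in>set xs. in_lp p y) \<and>
     mset xs = mset ys \<longrightarrow> L xs = L ys)"

definition continuous_lp :: "ereal \<Rightarrow> nat \<Rightarrow> ((nat \<Rightarrow> real) list \<Rightarrow> real) \<Rightarrow> bool" where
  "continuous_lp p m L = (\<forall>xs. length xs = m \<and> (\<forall>y\<in>set xs. in_lp p y) \<longrightarrow>
     (\<forall>e>0. \<exists>d>0. \<forall>ys. length ys = m \<and> (\<forall>y\<in>set ys. in_lp p y) \<and>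
        (\<forall>i<m. lp_norm p (\<lambda>j. (ys ! i) j - (xs ! i) j) < d) \<longrightarrow> \<bar>L ys - L xs\<bar> < e))"

definition poly_hat :: "nat \<Rightarrow> ((nat \<Rightarrow> real) list \<Rightarrow> real) \<Rightarrow> (nat \<Rightarrow> real) \<Rightarrow> real" where
  "poly_hat m L x = L (replicate m x)"

definition poly_norm :: "ereal \<Rightarrow> nat \<Rightarrow> ((nat \<Rightarrow> real) list \<Rightarrow> real) \<Rightarrow> real" where
  "poly_norm p m L = Sup {\<bar>poly_hat m L x\<bar> | x. in_lp p x \<and> lp_norm p x \<le> 1}"

definition power_tuple :: "nat \<Rightarrow> (nat \<Rightarrow> nat \<Rightarrow> real) \<Rightarrow> (nat \<Rightarrow> nat) \<Rightarrow> (nat \<Rightarrow> real) list" where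
  "power_tuple n x k = concat (map (\<lambda>i. replicate (k i) (x i)) [0..<n])"

definition thm5_bound :: "ereal \<Rightarrow> nat \<Rightarrow> nat \<Rightarrow> (nat \<Rightarrow> nat) \<Rightarrow> real" where
  "thm5_bound p m n k =
    (let first = real (\<Prod>i<n. k i ^ k i) / fact m *
                 (if p = \<infinity> then 1 else real n powr (real m / real_of_ereal p));
         q = real_of_ereal p
     in if p = \<infinity> then first
        else if q \<ge> real m then
          min first (q * 2 powr (q/2) * Gamma (q/2) * real m powr (q/2) / fact m)
        else
          min first (real n powr ((real m - q) / q) * real m * 2 powr (real m / 2)
                     * Gamma (real m / 2) * real m powr (real m / 2) / fact m))"

end

theory Submission
  imports Defs "HOL-Probability.Hoeffding"
begin


lemma p_finite:
  assumes "1 \<le> p" "p \<noteq> \<infinity>"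
  shows "p = ereal (real_of_ereal p)" "real_of_ereal p \<ge> 1"
  using assms by (cases p; auto)+

lemma in_lp_zero: "in_lp p (\<lambda>_. 0)"
  by (auto simp: in_lp_def)

lemma in_lp_lincomb:
  assumes p: "1 \<le> p" and u: "in_lp p u" and v: "in_lp p v"
  shows "in_lp p (\<lambda>j. a * u j + b * v j)"
proof (cases "p = \<infinity>")
  case True
  from u v True obtain U V where U: "\<And>j. \<bar>u j\<bar> \<le> U" and V: "\<And>j. \<bar>v j\<bar> \<le> V"
    by (auto simp: in_lp_def bdd_above_def)
  have "\<bar>a * u j + b * v j\<bar> \<le> \<bar>a\<bar> * U + \<bar>b\<bar> * V" for j
  proof -
    have "\<bar>a * u j + b * v j\<bar> \<le> \<bar>a\<bar> * \<bar>u j\<bar> + \<bar>b\<bar> * \<bar>v j\<bar>"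
      by (metis abs_mult abs_triangle_ineq)
    also have "\<dots> \<le> \<bar>a\<bar> * U + \<bar>b\<bar> * V"
      by (intro add_mono mult_left_mono U V) auto
    finally show ?thesis .
  qed
  thus ?thesis using True by (auto simp: in_lp_def bdd_above_def)
next
  case False
  define q where "q = real_of_ereal p"
  have q: "q \<ge> 1" using p_finite[OF p False] q_def by simp
  have su: "summable (\<lambda>j. \<bar>u j\<bar> powr q)" and sv: "summable (\<lambda>j. \<bar>v j\<bar> powr q)"
    using u v False by (auto simp: in_lp_def q_def)
  define M where "M = 2 * max \<bar>a\<bar> \<bar>b\<bar>"
  have *: "\<bar>a * u j + b * v j\<bar> powr q \<le> M powr q * (\<bar>u j\<bar> powr q + \<bar>v j\<bar> powr q)" for j
  proof -
    have "\<bar>a * u j + b * v j\<bar> \<le> \<bar>a\<bar> * \<bar>u j\<bar> + \<bar>b\<bar> * \<bar>v j\<bar>"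
      by (metis abs_mult abs_triangle_ineq)
    also have "\<dots> \<le> M * max \<bar>u j\<bar> \<bar>v j\<bar>"
    proof -
      have "\<bar>a\<bar> * \<bar>u j\<bar> \<le> max \<bar>a\<bar> \<bar>b\<bar> * max \<bar>u j\<bar> \<bar>v j\<bar>" by (intro mult_mono) auto
      moreover have "\<bar>b\<bar> * \<bar>v j\<bar> \<le> max \<bar>a\<bar> \<bar>b\<bar> * max \<bar>u j\<bar> \<bar>v j\<bar>" by (intro mult_mono) auto
      ultimately show ?thesis unfolding M_def by linarith
    qed
    finally have "\<bar>a * u j + b * v j\<bar> powr q \<le> (M * max \<bar>u j\<bar> \<bar>v j\<bar>) powr q"
      using q by (intro powr_mono2) auto
    also have "\<dots> = M powr q * (max \<bar>u j\<bar> \<bar>v j\<bar>) powr q"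
      using powr_mult[of M "max \<bar>u j\<bar> \<bar>v j\<bar>" q] by (simp add: M_def)
    also have "(max \<bar>u j\<bar> \<bar>v j\<bar>) powr q \<le> \<bar>u j\<bar> powr q + \<bar>v j\<bar> powr q"
      by (cases "\<bar>u j\<bar> \<le> \<bar>v j\<bar>") (auto simp: max_def)
    hence "M powr q * (max \<bar>u j\<bar> \<bar>v j\<bar>) powr q \<le> M powr q * (\<bar>u j\<bar> powr q + \<bar>v j\<bar> powr q)"
      by (intro mult_left_mono) auto
    finally show ?thesis .
  qed
  have sM: "summable (\<lambda>j. M powr q * (\<bar>u j\<bar> powr q + \<bar>v j\<bar> powr q))"
    using su sv by (intro summable_mult summable_add)
  have "summable (\<lambda>j. \<bar>a * u j + b * v j\<bar> powr q)"
  proof (rule summable_comparison_test'[where N=0, OF sM])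
    fix j :: nat
    show "norm (\<bar>a * u j + b * v j\<bar> powr q) \<le> M powr q * (\<bar>u j\<bar> powr q + \<bar>v j\<bar> powr q)"
      using *[of j] by simp
  qed
  thus ?thesis using False by (simp add: in_lp_def q_def)
qed

lemma in_lp_sum:
  fixes N :: nat
  assumes p: "1 \<le> p" and z: "\<forall>j<N. in_lp p (z j)"
  shows "in_lp p (\<lambda>t. \<Sum>j<N. c j * z j t)"
  using z
proof (induction N)
  case 0 thus ?case by (simp add: in_lp_zero)
next
  case (Suc N)
  hence "in_lp p (\<lambda>t. 1 * (\<Sum>j<N. c j * z j t) + c N * z N t)"
    by (intro in_lp_lincomb p) auto
  thus ?case by simp
qed

lemma lin_sum_lemma:
  fixes N :: nat
  assumes MLin: "multilinear_lp p m L" and p: "1 \<le> p"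
    and xs: "length xs = m" "\<forall>y\<in>set xs. in_lp p y" and i: "i < m"
    and z: "\<forall>j<N. in_lp p (z j)"
  shows "L (xs[i := (\<lambda>t. \<Sum>j<N. c j * z j t)]) = (\<Sum>j<N. c j * L (xs[i := z j]))"
  using z
proof (induction N)
  case 0
  have "L (xs[i := (\<lambda>t. 0 * 0 + 0 * 0)]) = 0 * L (xs[i := (\<lambda>_. 0)]) + 0 * L (xs[i := (\<lambda>_. 0)])"
    using MLin xs i in_lp_zero unfolding multilinear_lp_def by blast
  thus ?case by simp
next
  case (Suc N)
  have "L (xs[i := (\<lambda>t. 1 * (\<Sum>j<N. c j * z j t) + c N * z N t)]) =
        1 * L (xs[i := (\<lambda>t. \<Sum>j<N. c j * z j t)]) + c N * L (xs[i := z N])"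
    using MLin[unfolded multilinear_lp_def, rule_format, of xs i "\<lambda>t. \<Sum>j<N. c j * z j t" "z N" 1 "c N"]
      xs i Suc.prems in_lp_sum[OF p, of N z c] by auto
  thus ?case using Suc by simp
qed

definition LS :: "nat \<Rightarrow> nat \<Rightarrow> nat list set" where
  "LS r N = {fs. length fs = r \<and> set fs \<subseteq> {..<N}}"

lemma finite_LS: "finite (LS r N)"
  unfolding LS_def by (rule finite_subset[OF _ finite_lists_length_eq[of "{..<N}" r]]) auto

lemma LS_Suc: "LS (Suc r) N = (\<lambda>(j,fs). j # fs) ` ({..<N} \<times> LS r N)"
  unfolding LS_def by (auto simp: length_Suc_conv image_iff)

lemma expand:
  fixes N :: nat
  assumes MLin: "multilinear_lp p m L" and p: "1 \<le> p" and z: "\<forall>j<N. in_lp p (z j)"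
  shows "length pre + r + length ws = m \<Longrightarrow> \<forall>y\<in>set pre \<union> set ws. in_lp p y \<Longrightarrow>
    L (pre @ replicate r (\<lambda>t. \<Sum>j<N. c j * z j t) @ ws) =
    (\<Sum>fs\<in>LS r N. prod_list (map c fs) * L (pre @ map z fs @ ws))"
proof (induction r arbitrary: pre)
  case 0
  have "LS 0 N = {[]}" by (auto simp: LS_def)
  thus ?case by simp
next
  case (Suc r)
  define V where "V = (\<lambda>t. \<Sum>j<N. c j * z j t)"
  have V: "in_lp p V" unfolding V_def by (rule in_lp_sum[OF p z])
  define xs where "xs = pre @ V # (replicate r V @ ws)"
  have xs: "length xs = m" "\<forall>y\<in>set xs. in_lp p y"
    using Suc.prems V by (auto simp: xs_def)
  have i: "length pre < m" using Suc.prems by simp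
  have "L (pre @ replicate (Suc r) V @ ws) = L (xs[length pre := V])"
    by (simp add: xs_def)
  also have "\<dots> = (\<Sum>j<N. c j * L (xs[length pre := z j]))"
    unfolding V_def by (rule lin_sum_lemma[OF MLin p xs i z])
  also have "\<dots> = (\<Sum>j<N. c j * L ((pre @ [z j]) @ replicate r V @ ws))"
    by (simp add: xs_def)
  also have "\<dots> = (\<Sum>j<N. c j * (\<Sum>fs\<in>LS r N. prod_list (map c fs) * L ((pre @ [z j]) @ map z fs @ ws)))"
  proof (intro sum.cong refl arg_cong2[where f="(*)"])
    fix j assume "j \<in> {..<N}"
    thus "L ((pre @ [z j]) @ replicate r V @ ws) = (\<Sum>fs\<in>LS r N. prod_list (map c fs) * L ((pre @ [z j]) @ map z fs @ ws))"
      unfolding V_def using Suc.prems z by (intro Suc.IH) auto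
  qed
  also have "\<dots> = (\<Sum>(j,fs)\<in>{..<N} \<times> LS r N. prod_list (map c (j#fs)) * L (pre @ map z (j#fs) @ ws))"
    unfolding sum.cartesian_product[symmetric] by (simp add: sum_distrib_left mult.assoc)
  also have "\<dots> = (\<Sum>x\<in>{..<N} \<times> LS r N. (\<lambda>fs. prod_list (map c fs) * L (pre @ map z fs @ ws)) ((\<lambda>(j,fs). j # fs) x))"
    by (intro sum.cong refl) (simp add: case_prod_beta)
  also have "\<dots> = (\<Sum>fs\<in>(\<lambda>(j,fs). j # fs) ` ({..<N} \<times> LS r N). prod_list (map c fs) * L (pre @ map z fs @ ws))"
  proof -
    have inj: "inj_on (\<lambda>(j::nat,fs). j # fs) ({..<N} \<times> LS r N)" by (auto simp: inj_on_def)
    show ?thesis by (simp only: sum.reindex[OF inj] o_def)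
  qed
  also have "\<dots> = (\<Sum>fs\<in>LS (Suc r) N. prod_list (map c fs) * L (pre @ map z fs @ ws))"
    by (simp only: LS_Suc)
  finally show ?case by (simp add: V_def)
qed



definition SG :: "nat \<Rightarrow> (nat \<Rightarrow> real) set" where
  "SG m = PiE {..<m} (\<lambda>_. {-1,1})"

lemma finite_SG: "finite (SG m)"
  unfolding SG_def by (intro finite_PiE) auto

lemma card_SG: "card (SG m) = 2 ^ m"
  unfolding SG_def by (subst card_PiE) (auto simp: numeral_2_eq_2)

lemma SG_sq: "es \<in> SG m \<Longrightarrow> j < m \<Longrightarrow> es j * es j = 1"
  unfolding SG_def by (auto simp: PiE_def Pi_def)

lemma SG_abs: "es \<in> SG m \<Longrightarrow> j < m \<Longrightarrow> \<bar>es j\<bar> = 1"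
  unfolding SG_def by (auto simp: PiE_def Pi_def)

lemma prod_list_map_mult:
  "prod_list (map (\<lambda>j. f j * g j) xs) = prod_list (map f xs) * prod_list (map (g::_\<Rightarrow>real) xs)"
  by (induction xs) (auto simp: algebra_simps)

lemma LS_distinct_set:
  assumes "fs \<in> LS m m" "distinct fs"
  shows "set fs = {..<m}"
proof -
  have "set fs \<subseteq> {..<m}" "card (set fs) = m" using assms by (auto simp: LS_def distinct_card)
  thus ?thesis by (intro card_subset_eq) auto
qed

lemma sign_sum:
  assumes fs: "fs \<in> LS m m"
  shows "(\<Sum>es\<in>SG m. (\<Prod>j<m. es j) * prod_list (map es fs)) = (if distinct fs then 2^m else 0)"
proof (cases "distinct fs")
  case True
  have set: "set fs = {..<m}" by (rule LS_distinct_set[OF fs True])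
  have "(\<Sum>es\<in>SG m. (\<Prod>j<m. es j) * prod_list (map es fs)) = (\<Sum>es\<in>SG m. 1)"
  proof (intro sum.cong refl)
    fix es assume es: "es \<in> SG m"
    have "prod_list (map es fs) = (\<Prod>j<m. es j)"
      using prod.distinct_set_conv_list[OF True, of es] set by simp
    hence "(\<Prod>j<m. es j) * prod_list (map es fs) = (\<Prod>j<m. es j * es j)"
      by (simp add: prod.distrib)
    also have "\<dots> = 1" using SG_sq[OF es] by (intro prod.neutral) auto
    finally show "(\<Prod>j<m. es j) * prod_list (map es fs) = 1" .
  qed
  thus ?thesis using True by (simp add: card_SG)
next
  case False
  have sub: "set fs \<subseteq> {..<m}" and len: "length fs = m" using fs by (auto simp: LS_def)
  have "card (set fs) \<noteq> m" using False len card_distinct by metis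
  hence "set fs \<noteq> {..<m}" by (metis card_lessThan)
  then obtain j0 where j0: "j0 < m" "j0 \<notin> set fs" using sub by auto
  define \<phi> where "\<phi> = (\<lambda>es::nat\<Rightarrow>real. es(j0 := - es j0))"
  define T where "T = (\<lambda>es::nat\<Rightarrow>real. (\<Prod>j<m. es j) * prod_list (map es fs))"
  have \<phi>SG: "\<phi> es \<in> SG m" if "es \<in> SG m" for es
    using that j0 unfolding SG_def \<phi>_def by (auto simp: PiE_def Pi_def extensional_def)
  have \<phi>\<phi>: "\<phi> (\<phi> es) = es" for es unfolding \<phi>_def by auto
  have T\<phi>: "T (\<phi> es) = - T es" for es
  proof -
    have "(\<Prod>j<m. \<phi> es j) = \<phi> es j0 * (\<Prod>j\<in>{..<m} - {j0}. \<phi> es j)"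
      using j0 by (subst prod.remove[of _ j0]) auto
    also have "(\<Prod>j\<in>{..<m} - {j0}. \<phi> es j) = (\<Prod>j\<in>{..<m} - {j0}. es j)"
      unfolding \<phi>_def by (intro prod.cong) auto
    also have "\<phi> es j0 * (\<Prod>j\<in>{..<m} - {j0}. es j) = - (es j0 * (\<Prod>j\<in>{..<m} - {j0}. es j))"
      unfolding \<phi>_def by simp
    also have "es j0 * (\<Prod>j\<in>{..<m} - {j0}. es j) = (\<Prod>j<m. es j)"
      using j0 by (subst prod.remove[of _ j0]) auto
    finally have A: "(\<Prod>j<m. \<phi> es j) = - (\<Prod>j<m. es j)" .
    have B: "map (\<phi> es) fs = map es fs"
      using j0 unfolding \<phi>_def by (intro map_cong) auto
    show ?thesis unfolding T_def A B by simp
  qed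
  have "sum T (SG m) = sum (\<lambda>es. T (\<phi> es)) (SG m)"
    by (rule sum.reindex_bij_witness[of _ \<phi> \<phi>]) (auto simp: \<phi>\<phi> \<phi>SG)
  also have "\<dots> = - sum T (SG m)" by (simp add: T\<phi> sum_negf)
  finally have "sum T (SG m) = 0" by simp
  thus ?thesis using False by (simp add: T_def)
qed

lemma polar:
  assumes MLin: "multilinear_lp p m L" and SYM: "symmetric_lp p m L" and p: "1 \<le> p"
    and zs: "length zs = m" "\<forall>y\<in>set zs. in_lp p y"
  shows "(\<Sum>es\<in>SG m. (\<Prod>j<m. es j) * L (replicate m (\<lambda>t. \<Sum>j<m. (es j * d j) * (zs!j) t)))
         = 2^m * fact m * (\<Prod>j<m. d j) * L zs"
proof -
  have z: "\<forall>j<m. in_lp p (zs!j)" using zs by auto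
  have E: "L (replicate m (\<lambda>t. \<Sum>j<m. (es j * d j) * (zs!j) t)) =
      (\<Sum>fs\<in>LS m m. prod_list (map (\<lambda>j. es j * d j) fs) * L (map (nth zs) fs))" for es
    using expand[OF MLin p z, of "[]" m "[]" "\<lambda>j. es j * d j"] by simp
  have D: "prod_list (map d fs) * L (map (nth zs) fs) = (\<Prod>j<m. d j) * L zs"
    if fs: "fs \<in> LS m m" "distinct fs" for fs
  proof -
    have set: "set fs = {..<m}" by (rule LS_distinct_set[OF fs])
    have "prod_list (map d fs) = (\<Prod>j<m. d j)"
      using prod.distinct_set_conv_list[OF fs(2), of d] set by simp
    moreover have "L (map (nth zs) fs) = L zs"
    proof -
      have "mset fs = mset [0..<m]"
        using set fs(2) by (subst set_eq_iff_mset_eq_distinct[symmetric]) (auto simp: atLeast0LessThan)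
      hence "mset (map (nth zs) fs) = mset (map (nth zs) [0..<length zs])" using zs by simp
      hence "mset zs = mset (map (nth zs) fs)" by (simp add: map_nth)
      thus ?thesis using SYM zs unfolding symmetric_lp_def by metis
    qed
    ultimately show ?thesis by simp
  qed
  have "(\<Sum>es\<in>SG m. (\<Prod>j<m. es j) * L (replicate m (\<lambda>t. \<Sum>j<m. (es j * d j) * (zs!j) t)))
      = (\<Sum>es\<in>SG m. \<Sum>fs\<in>LS m m. (prod_list (map d fs) * L (map (nth zs) fs)) * ((\<Prod>j<m. es j) * prod_list (map es fs)))"
    unfolding E by (simp add: sum_distrib_left prod_list_map_mult mult_ac)
  also have "\<dots> = (\<Sum>fs\<in>LS m m. \<Sum>es\<in>SG m. (prod_list (map d fs) * L (map (nth zs) fs)) * ((\<Prod>j<m. es j) * prod_list (map es fs)))"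
    by (rule sum.swap)
  also have "\<dots> = (\<Sum>fs\<in>LS m m. (prod_list (map d fs) * L (map (nth zs) fs)) * (if distinct fs then 2^m else 0))"
    by (simp add: sum_distrib_left[symmetric] sign_sum)
  also have "\<dots> = (\<Sum>fs\<in>LS m m. if distinct fs then 2^m * ((\<Prod>j<m. d j) * L zs) else 0)"
    by (intro sum.cong refl) (auto simp: D)
  also have "\<dots> = (\<Sum>fs\<in>{fs\<in>LS m m. distinct fs}. 2^m * ((\<Prod>j<m. d j) * L zs))"
    by (rule sum.inter_filter[OF finite_LS, symmetric])
  also have "\<dots> = real (card {fs\<in>LS m m. distinct fs}) * (2^m * ((\<Prod>j<m. d j) * L zs))"
    by simp
  also have "card {fs\<in>LS m m. distinct fs} = \<Prod>{1..m}"
  proof -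
    have "{fs\<in>LS m m. distinct fs} = {xs. length xs = m \<and> distinct xs \<and> set xs \<subseteq> {..<m}}"
      by (auto simp: LS_def)
    thus ?thesis using card_lists_distinct_length_eq[of "{..<m}" m] by simp
  qed
  finally show ?thesis by (simp add: fact_prod)
qed



lemma lp_norm_nonneg:
  assumes "in_lp p y" shows "0 \<le> lp_norm p y"
proof (cases "p = \<infinity>")
  case True
  hence "bdd_above (range (\<lambda>j. \<bar>y j\<bar>))" using assms by (simp add: in_lp_def)
  hence bdd: "bdd_above (range (\<lambda>j. \<bar>y j\<bar>))" .
  have "\<bar>y 0\<bar> \<le> (SUP j. \<bar>y j\<bar>)" by (rule cSUP_upper[OF _ bdd]) simp
  thus ?thesis using True by (simp add: lp_norm_def) (meson abs_ge_zero order.trans)?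
next
  case False thus ?thesis by (simp add: lp_norm_def)
qed

lemma in_lp_scale:
  assumes "1 \<le> p" "in_lp p y" shows "in_lp p (\<lambda>j. c * y j)"
  using in_lp_lincomb[OF assms assms(2), of c 0] by simp

lemma lp_norm_scale_le:
  assumes p: "1 \<le> p" and y: "in_lp p y"
  shows "lp_norm p (\<lambda>j. c * y j) \<le> \<bar>c\<bar> * lp_norm p y"
proof (cases "p = \<infinity>")
  case True
  hence bdd: "bdd_above (range (\<lambda>j. \<bar>y j\<bar>))" using y by (simp add: in_lp_def)
  have "(SUP j. \<bar>c * y j\<bar>) \<le> \<bar>c\<bar> * (SUP j. \<bar>y j\<bar>)"
  proof (rule cSUP_least)
    fix j
    have "\<bar>y j\<bar> \<le> (SUP j. \<bar>y j\<bar>)" by (rule cSUP_upper[OF _ bdd]) auto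
    thus "\<bar>c * y j\<bar> \<le> \<bar>c\<bar> * (SUP j. \<bar>y j\<bar>)" by (simp add: abs_mult mult_left_mono)
  qed auto
  thus ?thesis using True by (simp add: lp_norm_def)
next
  case False
  define q where "q = real_of_ereal p"
  have q: "q \<ge> 1" using p_finite[OF p False] q_def by simp
  have su: "summable (\<lambda>j. \<bar>y j\<bar> powr q)" using y False by (auto simp: in_lp_def q_def)
  have "(\<Sum>j. \<bar>c * y j\<bar> powr q) = (\<Sum>j. \<bar>c\<bar> powr q * \<bar>y j\<bar> powr q)"
    by (simp add: abs_mult powr_mult)
  also have "\<dots> = \<bar>c\<bar> powr q * (\<Sum>j. \<bar>y j\<bar> powr q)" by (rule suminf_mult[OF su])
  finally have "(\<Sum>j. \<bar>c * y j\<bar> powr q) powr (1/q) = (\<bar>c\<bar> powr q) powr (1/q) * (\<Sum>j. \<bar>y j\<bar> powr q) powr (1/q)"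
    by (simp add: powr_mult suminf_nonneg su)
  also have "(\<bar>c\<bar> powr q) powr (1/q) = \<bar>c\<bar>" using q by (simp add: powr_powr)
  finally show ?thesis using False by (simp add: lp_norm_def q_def)
qed

lemma lp_norm_zero:
  assumes p: "1 \<le> p" and y: "in_lp p y" and z: "lp_norm p y = 0"
  shows "y = (\<lambda>_. 0)"
proof (cases "p = \<infinity>")
  case True
  hence bdd: "bdd_above (range (\<lambda>j. \<bar>y j\<bar>))" using y by (simp add: in_lp_def)
  show ?thesis
  proof
    fix j
    have "\<bar>y j\<bar> \<le> (SUP j. \<bar>y j\<bar>)" by (rule cSUP_upper[OF _ bdd]) auto
    thus "y j = 0" using z True by (simp add: lp_norm_def)
  qed
next
  case False
  define q where "q = real_of_ereal p"
  have q: "q \<ge> 1" using p_finite[OF p False] q_def by simp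
  have su: "summable (\<lambda>j. \<bar>y j\<bar> powr q)" using y False by (auto simp: in_lp_def q_def)
  have "(\<Sum>j. \<bar>y j\<bar> powr q) powr (1/q) = 0" using z False by (simp add: lp_norm_def q_def)
  hence "(\<Sum>j. \<bar>y j\<bar> powr q) = 0" by simp
  hence "\<forall>j. \<bar>y j\<bar> powr q = 0" using suminf_eq_zero_iff[OF su] by simp
  thus ?thesis by auto
qed

lemma LS_1: "LS m (Suc 0) = {replicate m 0}"
  by (auto simp: LS_def intro: replicate_eqI)

lemma homog:
  assumes MLin: "multilinear_lp p m L" and p: "1 \<le> p" and y: "in_lp p y"
  shows "L (replicate m (\<lambda>t. c * y t)) = c ^ m * L (replicate m y)"
  using expand[OF MLin p, of 1 "\<lambda>_. y" "[]" m "[]" "\<lambda>_. c"] y by (simp add: LS_1)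

definition PN_set where "PN_set p m L = {\<bar>poly_hat m L x\<bar> | x. in_lp p x \<and> lp_norm p x \<le> 1}"

lemma poly_norm_bdd:
  assumes MLin: "multilinear_lp p m L" and CONT: "continuous_lp p m L" and p: "1 \<le> p" and m: "m \<ge> 1"
  shows "bdd_above (PN_set p m L)"
proof -
  define xs0 where "xs0 = replicate m (\<lambda>_::nat. 0::real)"
  have xs0: "length xs0 = m" "\<forall>y\<in>set xs0. in_lp p y" by (auto simp: xs0_def in_lp_zero)
  have L0: "L xs0 = 0"
    using homog[OF MLin p in_lp_zero, of 0] m by (simp add: xs0_def power_0_left)
  have H: "\<forall>e>0. \<exists>d>0. \<forall>ys. length ys = m \<and> (\<forall>y\<in>set ys. in_lp p y) \<and>
        (\<forall>i<m. lp_norm p (\<lambda>j. (ys ! i) j - (xs0 ! i) j) < d) \<longrightarrow> \<bar>L ys - L xs0\<bar> < e"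
    using CONT xs0 unfolding continuous_lp_def by blast
  obtain d where d: "d > 0" and dH0: "\<forall>ys. length ys = m \<and> (\<forall>y\<in>set ys. in_lp p y) \<and>
        (\<forall>i<m. lp_norm p (\<lambda>j. (ys ! i) j - (xs0 ! i) j) < d) \<longrightarrow> \<bar>L ys - L xs0\<bar> < 1"
    using H[rule_format, OF zero_less_one] by blast
  have dH: "\<bar>L ys - L xs0\<bar> < 1" if "length ys = m" "\<forall>y\<in>set ys. in_lp p y"
     "\<forall>i<m. lp_norm p (\<lambda>j. (ys ! i) j - (xs0 ! i) j) < d" for ys
    using dH0 that by blast
  define c where "c = d / 2"
  have c: "c > 0" using d by (simp add: c_def)
  show ?thesis unfolding bdd_above_def
  proof (intro exI ballI)
    fix v assume "v \<in> PN_set p m L"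
    then obtain x where v: "v = \<bar>poly_hat m L x\<bar>" and x: "in_lp p x" "lp_norm p x \<le> 1"
      by (auto simp: PN_set_def)
    define ys where "ys = replicate m (\<lambda>t. c * x t)"
    have cx: "in_lp p (\<lambda>t. c * x t)" by (rule in_lp_scale[OF p x(1)])
    have "lp_norm p (\<lambda>t. c * x t) \<le> \<bar>c\<bar> * lp_norm p x" by (rule lp_norm_scale_le[OF p x(1)])
    also have "\<dots> \<le> c * 1" using c x by simp
    also have "\<dots> < d" using d by (simp add: c_def)
    finally have "lp_norm p (\<lambda>t. c * x t) < d" .
    hence "\<bar>L ys - L xs0\<bar> < 1"
      using cx by (intro dH) (auto simp: ys_def xs0_def)
    hence "\<bar>c ^ m * poly_hat m L x\<bar> < 1"
      using homog[OF MLin p x(1), of c] L0 by (simp add: ys_def poly_hat_def)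
    hence "c ^ m * v < 1" using c by (simp add: v abs_mult)
    hence "v < 1 / c ^ m" using c by (simp add: field_simps)
    thus "v \<le> 1 / c ^ m" by simp
  qed
qed

lemma poly_norm_nonneg:
  assumes "multilinear_lp p m L" "continuous_lp p m L" "1 \<le> p" "m \<ge> 1"
  shows "0 \<le> poly_norm p m L"
proof -
  have "lp_norm p (\<lambda>_. 0) \<le> 1" using lp_norm_zero in_lp_zero
    by (cases "p = \<infinity>") (auto simp: lp_norm_def)
  hence "\<bar>poly_hat m L (\<lambda>_. 0)\<bar> \<in> PN_set p m L" using in_lp_zero unfolding PN_set_def by blast
  hence "\<bar>poly_hat m L (\<lambda>_. 0)\<bar> \<le> Sup (PN_set p m L)" by (rule cSup_upper[OF _ poly_norm_bdd[OF assms]])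
  thus ?thesis unfolding poly_norm_def PN_set_def by (meson abs_ge_zero order.trans)
qed

lemma hat_bound:
  assumes MLin: "multilinear_lp p m L" and CONT: "continuous_lp p m L" and p: "1 \<le> p" and m: "m \<ge> 1"
    and y: "in_lp p y"
  shows "\<bar>L (replicate m y)\<bar> \<le> poly_norm p m L * lp_norm p y ^ m"
proof (cases "lp_norm p y = 0")
  case True
  hence "y = (\<lambda>_. 0)" by (rule lp_norm_zero[OF p y])
  hence "L (replicate m y) = 0" using homog[OF MLin p in_lp_zero, of 0] m by (simp add: power_0_left)
  thus ?thesis using True m by (simp add: power_0_left)
next
  case False
  define s where "s = lp_norm p y"
  have s: "s > 0" using False lp_norm_nonneg[OF y] by (simp add: s_def)
  define y' where "y' = (\<lambda>t. (1/s) * y t)"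
  have y': "in_lp p y'" unfolding y'_def by (rule in_lp_scale[OF p y])
  have "lp_norm p y' \<le> \<bar>1/s\<bar> * s" unfolding y'_def s_def by (rule lp_norm_scale_le[OF p y])
  hence "lp_norm p y' \<le> 1" using s by simp
  hence "\<bar>poly_hat m L y'\<bar> \<in> PN_set p m L" using y' unfolding PN_set_def by blast
  hence le: "\<bar>poly_hat m L y'\<bar> \<le> poly_norm p m L"
    unfolding poly_norm_def PN_set_def[symmetric] by (rule cSup_upper[OF _ poly_norm_bdd[OF MLin CONT p m]])
  have "y = (\<lambda>t. s * y' t)" using s by (auto simp: y'_def)
  hence "L (replicate m y) = s ^ m * poly_hat m L y'"
    using homog[OF MLin p y', of s] by (simp add: poly_hat_def)
  hence "\<bar>L (replicate m y)\<bar> = s ^ m * \<bar>poly_hat m L y'\<bar>" using s by (simp add: abs_mult)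
  also have "\<dots> \<le> s ^ m * poly_norm p m L" using le s by (intro mult_left_mono) auto
  finally show ?thesis by (simp add: s_def mult.commute)
qed



lemma disj_single:
  fixes n :: nat and x :: "nat \<Rightarrow> nat \<Rightarrow> real"
  assumes disj: "\<forall>i<n. \<forall>j<n. i \<noteq> j \<longrightarrow> supp (x i) \<inter> supp (x j) = {}"
  shows "\<exists>i0. \<forall>i<n. i \<noteq> i0 \<longrightarrow> x i t = 0"
proof (cases "\<exists>i0<n. x i0 t \<noteq> 0")
  case True
  then obtain i0 where i0: "i0 < n" "x i0 t \<noteq> 0" by blast
  have "x i t = 0" if "i < n" "i \<noteq> i0" for i
    using disj that i0 unfolding supp_def by blast
  thus ?thesis by blast
next
  case False thus ?thesis by blast
qed

lemma sum_single_nz: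
  fixes n i0 :: nat
  assumes "\<forall>i<n. i \<noteq> i0 \<longrightarrow> f i = 0"
  shows "(\<Sum>i<n. f i) = (if i0 < n then f i0 else (0::real))"
proof -
  have "(\<Sum>i<n. f i) = (\<Sum>i<n. if i = i0 then f i else 0)"
    using assms by (intro sum.cong) auto
  also have "\<dots> = (if i0 < n then f i0 else 0)" by (induction n) auto
  finally show ?thesis .
qed

lemma disj_point_powr:
  fixes n :: nat and x :: "nat \<Rightarrow> nat \<Rightarrow> real"
  assumes disj: "\<forall>i<n. \<forall>j<n. i \<noteq> j \<longrightarrow> supp (x i) \<inter> supp (x j) = {}"
  shows "\<bar>\<Sum>i<n. a i * x i t\<bar> powr q = (\<Sum>i<n. \<bar>a i\<bar> powr q * \<bar>x i t\<bar> powr q)"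
proof -
  obtain i0 where i0: "\<forall>i<n. i \<noteq> i0 \<longrightarrow> x i t = 0" using disj_single[OF disj] by blast
  have A: "(\<Sum>i<n. a i * x i t) = (if i0 < n then a i0 * x i0 t else 0)"
    using i0 by (intro sum_single_nz[where f="\<lambda>i. a i * x i t"]) auto
  have B: "(\<Sum>i<n. \<bar>a i\<bar> powr q * \<bar>x i t\<bar> powr q) = (if i0 < n then \<bar>a i0\<bar> powr q * \<bar>x i0 t\<bar> powr q else 0)"
    using i0 by (intro sum_single_nz[where f="\<lambda>i. \<bar>a i\<bar> powr q * \<bar>x i t\<bar> powr q"]) auto
  show ?thesis unfolding A B by (auto simp: abs_mult powr_mult)
qed

lemma disj_point_le:
  fixes n :: nat and x :: "nat \<Rightarrow> nat \<Rightarrow> real"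
  assumes disj: "\<forall>i<n. \<forall>j<n. i \<noteq> j \<longrightarrow> supp (x i) \<inter> supp (x j) = {}"
    and le: "\<forall>i<n. \<bar>a i\<bar> * \<bar>x i t\<bar> \<le> B" and B: "B \<ge> 0"
  shows "\<bar>\<Sum>i<n. a i * x i t\<bar> \<le> B"
proof -
  obtain i0 where i0: "\<forall>i<n. i \<noteq> i0 \<longrightarrow> x i t = 0" using disj_single[OF disj] by blast
  have A: "(\<Sum>i<n. a i * x i t) = (if i0 < n then a i0 * x i0 t else 0)"
    using i0 by (intro sum_single_nz[where f="\<lambda>i. a i * x i t"]) auto
  show ?thesis unfolding A using le B by (auto simp: abs_mult)
qed

lemma lp_norm_one_sum:
  assumes p: "1 \<le> p" "p \<noteq> \<infinity>" and x: "in_lp p y" "lp_norm p y = 1"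
  shows "(\<Sum>t. \<bar>y t\<bar> powr real_of_ereal p) = 1"
proof -
  define q where "q = real_of_ereal p"
  have q: "q \<ge> 1" using p_finite[OF p] q_def by simp
  define X where "X = (\<Sum>t. \<bar>y t\<bar> powr q)"
  have su: "summable (\<lambda>t. \<bar>y t\<bar> powr q)" using x p by (auto simp: in_lp_def q_def)
  have X0: "X \<ge> 0" unfolding X_def by (intro suminf_nonneg su) auto
  have X1: "X powr (1/q) = 1" using x p by (simp add: lp_norm_def X_def q_def)
  hence "X \<noteq> 0" by auto
  hence "X = (X powr (1/q)) powr q" using X0 q by (simp add: powr_powr)
  thus ?thesis using X1 by (simp add: X_def q_def)
qed

lemma lp_disj_finite:
  fixes n :: nat and x :: "nat \<Rightarrow> nat \<Rightarrow> real"
  assumes p: "1 \<le> p" "p \<noteq> \<infinity>" and x: "\<forall>i<n. in_lp p (x i) \<and> lp_norm p (x i) = 1"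
    and disj: "\<forall>i<n. \<forall>j<n. i \<noteq> j \<longrightarrow> supp (x i) \<inter> supp (x j) = {}"
  shows "in_lp p (\<lambda>t. \<Sum>i<n. a i * x i t)"
    "lp_norm p (\<lambda>t. \<Sum>i<n. a i * x i t) = (\<Sum>i<n. \<bar>a i\<bar> powr real_of_ereal p) powr (1 / real_of_ereal p)"
proof -
  show "in_lp p (\<lambda>t. \<Sum>i<n. a i * x i t)" using x in_lp_sum[OF p(1), where N=n and z=x and c=a] by auto
  define q where "q = real_of_ereal p"
  have su: "summable (\<lambda>t. \<bar>x i t\<bar> powr q)" if "i < n" for i
    using x that p by (auto simp: in_lp_def q_def)
  have "(\<Sum>t. \<bar>\<Sum>i<n. a i * x i t\<bar> powr q) = (\<Sum>t. \<Sum>i<n. \<bar>a i\<bar> powr q * \<bar>x i t\<bar> powr q)"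
    by (simp add: disj_point_powr[OF disj])
  also have "\<dots> = (\<Sum>i<n. \<Sum>t. \<bar>a i\<bar> powr q * \<bar>x i t\<bar> powr q)"
    by (rule suminf_sum) (auto intro!: summable_mult su)
  also have "\<dots> = (\<Sum>i<n. \<bar>a i\<bar> powr q * (\<Sum>t. \<bar>x i t\<bar> powr q))"
    by (intro sum.cong refl suminf_mult su) auto
  also have "\<dots> = (\<Sum>i<n. \<bar>a i\<bar> powr q)"
    using lp_norm_one_sum[OF p] x by (intro sum.cong refl) (auto simp: q_def)
  finally show "lp_norm p (\<lambda>t. \<Sum>i<n. a i * x i t) = (\<Sum>i<n. \<bar>a i\<bar> powr real_of_ereal p) powr (1 / real_of_ereal p)"
    using p by (simp add: lp_norm_def q_def)
qed

lemma lp_disj_inf: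
  fixes n :: nat and x :: "nat \<Rightarrow> nat \<Rightarrow> real"
  assumes p: "p = \<infinity>" and x: "\<forall>i<n. in_lp p (x i) \<and> lp_norm p (x i) = 1"
    and disj: "\<forall>i<n. \<forall>j<n. i \<noteq> j \<longrightarrow> supp (x i) \<inter> supp (x j) = {}"
    and a: "\<forall>i<n. \<bar>a i\<bar> \<le> 1"
  shows "in_lp p (\<lambda>t. \<Sum>i<n. a i * x i t)" "lp_norm p (\<lambda>t. \<Sum>i<n. a i * x i t) \<le> 1"
proof -
  have pt: "\<bar>\<Sum>i<n. a i * x i t\<bar> \<le> 1" for t
  proof (rule disj_point_le[OF disj])
    show "\<forall>i<n. \<bar>a i\<bar> * \<bar>x i t\<bar> \<le> 1"
    proof (intro allI impI)
      fix i assume i: "i < n"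
      have bdd: "bdd_above (range (\<lambda>j. \<bar>x i j\<bar>))" using x i p by (simp add: in_lp_def)
      have "\<bar>x i t\<bar> \<le> (SUP j. \<bar>x i j\<bar>)" by (rule cSUP_upper[OF _ bdd]) simp
      also have "\<dots> = 1" using x i p by (simp add: lp_norm_def)
      finally have "\<bar>x i t\<bar> \<le> 1" .
      thus "\<bar>a i\<bar> * \<bar>x i t\<bar> \<le> 1" using a i by (simp add: mult_le_one)
    qed
  qed simp
  show "in_lp p (\<lambda>t. \<Sum>i<n. a i * x i t)" using pt p by (auto simp: in_lp_def bdd_above_def)
  show "lp_norm p (\<lambda>t. \<Sum>i<n. a i * x i t) \<le> 1"
    using pt p by (simp add: lp_norm_def cSUP_least)
qed

definition bl :: "nat \<Rightarrow> (nat \<Rightarrow> nat) \<Rightarrow> nat list" where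
  "bl n k = concat (map (\<lambda>i. replicate (k i) i) [0..<n])"

lemma bl_Suc: "bl (Suc n) k = bl n k @ replicate (k n) n"
  by (simp add: bl_def)

lemma power_tuple_bl: "power_tuple n x k = map x (bl n k)"
  by (simp add: power_tuple_def bl_def map_concat o_def)

lemma length_bl: "length (bl n k) = (\<Sum>i<n. k i)"
  by (induction n) (auto simp: bl_Suc bl_def)

lemma set_bl: "set (bl n k) \<subseteq> {..<n}"
  by (induction n) (auto simp: bl_Suc bl_def)

lemma filter_bl: "length (filter (\<lambda>y. y = i) (bl n k)) = (if i < n then k i else 0)"
  by (induction n) (auto simp: bl_Suc bl_def filter_replicate less_Suc_eq)

lemma count_bl: "i < n \<Longrightarrow> card {j. j < length (bl n k) \<and> bl n k ! j = i} = k i"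
  using filter_bl[of i n k] by (simp add: length_filter_conv_card)

lemma prod_bl: "prod_list (map f (bl n k)) = (\<Prod>i<n. f i ^ k i)"
  by (induction n) (auto simp: bl_Suc bl_def)

lemma prod_list_nth: "prod_list (map f xs) = (\<Prod>j<length xs. f (xs ! j))"
proof -
  have "prod_list (map f xs) = prod_list (map (\<lambda>j. f (xs ! j)) [0..<length xs])"
    by (subst map_nth[symmetric]) (simp only: map_map o_def)
  also have "\<dots> = (\<Prod>j\<in>set [0..<length xs]. f (xs ! j))"
    by (rule prod.distinct_set_conv_list[symmetric]) simp
  finally show ?thesis by (simp add: atLeast0LessThan)
qed



lemma Gamma_lower:
  assumes "x > (0::real)" shows "x powr x * exp (-x) \<le> Gamma (x+1)"
proof -
  have A: "((\<lambda>t. t powr x / exp t) has_integral Gamma (x+1)) {0..}"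
    using Gamma_integral_real[of "x+1"] assms by simp
  have "((\<lambda>t. exp (-1*t)) has_integral exp(-1*x)/1) {x..}"
    by (rule has_integral_exp_minus_to_infinity) simp
  hence "((\<lambda>t. x powr x * exp (-1*t)) has_integral x powr x * (exp (-1*x)/1)) {x..}"
    by (rule has_integral_mult_right)
  hence "((\<lambda>t. x powr x * exp (-t)) has_integral x powr x * exp (-x)) {x..}"
    by simp
  hence B: "((\<lambda>t. if t \<in> {x..} then x powr x * exp (-t) else 0) has_integral x powr x * exp(-x)) {0..}"
    using has_integral_restrict[of "{x..}" "{0..}" "\<lambda>t. x powr x * exp (-t)"] assms by simp
  show ?thesis
  proof (rule has_integral_le[OF B A])
    fix t :: real assume "t \<in> {0..}"
    show "(if t \<in> {x..} then x powr x * exp (-t) else 0) \<le> t powr x / exp t"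
    proof (cases "t \<ge> x")
      case True
      have "x powr x \<le> t powr x" using True assms by (intro powr_mono2) auto
      thus ?thesis using True by (simp add: exp_minus field_simps)
    qed auto
  qed
qed

definition Cq :: "real \<Rightarrow> real" where "Cq q = q * 2 powr (q/2) * Gamma (q/2)"

lemma Cq_ge:
  assumes q: "q > 0"
  shows "2 * q powr (q/2) * exp (-q/2) \<le> Cq q"
proof -
  have h: "q/2 > 0" using q by simp
  have "q/2 \<notin> \<int>\<^sub>\<le>\<^sub>0" using h by (auto elim!: nonpos_Ints_cases)
  hence G: "Gamma (q/2 + 1) = q/2 * Gamma (q/2)" by (rule Gamma_plus1)
  have "(q/2) powr (q/2) * exp (-(q/2)) \<le> q/2 * Gamma (q/2)" using Gamma_lower[OF h] G by simp
  hence "2 * 2 powr (q/2) * ((q/2) powr (q/2) * exp (-(q/2))) \<le> 2 * 2 powr (q/2) * (q/2 * Gamma (q/2))"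
    by (intro mult_left_mono) auto
  moreover have "2 powr (q/2) * (q/2) powr (q/2) = q powr (q/2)"
    using q by (simp add: powr_mult[symmetric])
  ultimately show ?thesis unfolding Cq_def by (simp add: algebra_simps)
qed

lemma cosh_le:
  fixes \<mu> :: real
  shows "(exp \<mu> + exp (-\<mu>)) / 2 \<le> exp (\<mu>^2 / 2)"
proof -
  define h where "h = 2 * \<bar>\<mu>\<bar>"
  have h0: "h \<ge> 0" by (simp add: h_def)
  have H1: "-h * (1/2) + ln (1 + (1/2) * (exp h - 1)) \<le> h^2 / 8"
    using Hoeffdings_lemma_aux[OF h0, of "1/2"] by simp
  have E: "1 + (1/2) * (exp h - 1) = (1 + exp h) / 2" by (simp add: field_simps)
  have "-h * (1/2) + ln ((1 + exp h) / 2) \<le> h^2 / 8" using H1 unfolding E .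
  hence "ln ((1 + exp h) / 2) \<le> h/2 + h^2/8" by simp
  hence "(1 + exp h) / 2 \<le> exp (h/2 + h^2/8)"
    by (metis add_pos_pos divide_pos_pos exp_gt_zero exp_ln zero_less_one zero_less_numeral exp_le_cancel_iff)
  also have "\<dots> = exp (h/2) * exp (\<mu>^2/2)" by (simp add: h_def exp_add[symmetric] power2_eq_square)
  finally have *: "(1 + exp h) / 2 \<le> exp (h/2) * exp (\<mu>^2/2)" .
  have "(exp (-(h/2)) + exp (h/2)) / 2 = ((1 + exp h) / 2) / exp (h/2)"
    by (simp add: exp_minus field_simps exp_add[symmetric])
  also have "\<dots> \<le> exp (\<mu>^2/2)" using * by (simp add: divide_le_eq mult.commute)
  finally have "(exp (-(h/2)) + exp (h/2)) / 2 \<le> exp (\<mu>^2/2)" .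
  thus ?thesis by (cases "\<mu> \<ge> 0") (auto simp: h_def add.commute)
qed

lemma exp_sum_signs:
  assumes B: "B \<subseteq> {..<m}"
  shows "(\<Sum>es\<in>SG m. exp (\<mu> * (\<Sum>j\<in>B. es j))) = 2^m * ((exp \<mu> + exp (-\<mu>))/2) ^ card B"
proof -
  have fB: "finite B" using B finite_subset by blast
  define h where "h = (\<lambda>j (e::real). if j \<in> B then exp (\<mu> * e) else 1)"
  have "(\<Sum>es\<in>SG m. exp (\<mu> * (\<Sum>j\<in>B. es j))) = (\<Sum>es\<in>SG m. \<Prod>j<m. h j (es j))"
  proof (intro sum.cong refl)
    fix es
    have "exp (\<mu> * (\<Sum>j\<in>B. es j)) = (\<Prod>j\<in>B. exp (\<mu> * es j))"
      by (simp add: sum_distrib_left exp_sum fB)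
    also have "\<dots> = (\<Prod>j\<in>{..<m} \<inter> B. exp (\<mu> * es j))" using B by (simp add: Int_absorb1)
    also have "\<dots> = (\<Prod>j<m. h j (es j))" unfolding h_def by (rule prod.inter_restrict) simp
    finally show "exp (\<mu> * (\<Sum>j\<in>B. es j)) = (\<Prod>j<m. h j (es j))" .
  qed
  also have "\<dots> = (\<Prod>j<m. \<Sum>e\<in>{-1,1}. h j e)"
    unfolding SG_def by (rule prod_sum_PiE[symmetric]) auto
  also have "\<dots> = (\<Prod>j<m. if j \<in> B then exp \<mu> + exp (-\<mu>) else 2)"
    by (intro prod.cong refl) (auto simp: h_def)
  also have "\<dots> = (exp \<mu> + exp (-\<mu>)) ^ card B * 2 ^ (m - card B)"
  proof -
    have "{..<m} \<inter> {x. x \<in> B} = B" using B by auto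
    moreover have "card ({..<m} \<inter> - {x. x \<in> B}) = m - card B"
    proof -
      have "{..<m} \<inter> - {x. x \<in> B} = {..<m} - B" by auto
      thus ?thesis using B fB by (simp add: card_Diff_subset)
    qed
    ultimately show ?thesis by (simp add: prod.If_cases)
  qed
  also have "\<dots> = 2^m * ((exp \<mu> + exp (-\<mu>))/2) ^ card B"
  proof -
    have "card B \<le> m" using B by (metis card_lessThan card_mono finite_lessThan)
    hence "(2::real)^m = 2 ^ card B * 2 ^ (m - card B)" by (simp add: power_add[symmetric])
    thus ?thesis by (simp add: power_divide)
  qed
  finally show ?thesis .
qed

lemma pow_exp_bound:
  fixes u lam q :: real
  assumes u: "u \<ge> 0" and l: "lam > 0" and q: "q > 0"
  shows "u powr q \<le> (q / (exp 1 * lam)) powr q * exp (lam * u)"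
proof (cases "u = 0")
  case True thus ?thesis using l q by simp
next
  case False
  hence u: "u > 0" using u by simp
  define A where "A = lam * u / q"
  have A: "A > 0" using u l q by (simp add: A_def)
  have lnA: "ln A \<le> A - 1" using A by (rule ln_le_minus_one)
  have "u powr q = exp (q * ln u)" using u by (simp add: powr_def)
  also have "q * ln u = q * ln (q / (exp 1 * lam)) + q * (ln A + 1)"
    using u l q by (simp add: A_def ln_div ln_mult algebra_simps)
  also have "\<dots> \<le> q * ln (q / (exp 1 * lam)) + lam * u"
    using lnA q by (simp add: A_def field_simps)
  finally have "u powr q \<le> exp (q * ln (q / (exp 1 * lam)) + lam * u)" by simp
  also have "\<dots> = (q / (exp 1 * lam)) powr q * exp (lam * u)"
    using l q by (simp add: powr_def exp_add)
  finally show ?thesis .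
qed

lemma moment:
  fixes q :: real
  assumes B: "B \<subseteq> {..<m}" and q: "q > 0"
  shows "(\<Sum>es\<in>SG m. \<bar>\<Sum>j\<in>B. es j\<bar> powr q) \<le> 2^m * (2 * q powr (q/2) * exp (-q/2)) * real (card B) powr (q/2)"
proof (cases "card B = 0")
  case True
  have fB: "finite B" using B finite_subset by blast
  hence "B = {}" using True by simp
  thus ?thesis using q by simp
next
  case False
  define b where "b = real (card B)"
  have b: "b > 0" using False by (simp add: b_def)
  define l where "l = sqrt (q / b)"
  have l: "l > 0" using b q by (simp add: l_def)
  define K where "K = (q / (exp 1 * l)) powr q"
  have pt: "\<bar>s\<bar> powr q \<le> K * (exp (l * s) + exp ((-l) * s))" for s
  proof -
    have "\<bar>s\<bar> powr q \<le> K * exp (l * \<bar>s\<bar>)" unfolding K_def by (rule pow_exp_bound[OF _ l q]) simp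
    also have "exp (l * \<bar>s\<bar>) \<le> exp (l * s) + exp ((-l) * s)" by (cases "s \<ge> 0") auto
    hence "K * exp (l * \<bar>s\<bar>) \<le> K * (exp (l * s) + exp ((-l) * s))"
      by (intro mult_left_mono) (auto simp: K_def)
    finally show ?thesis .
  qed
  have "(\<Sum>es\<in>SG m. \<bar>\<Sum>j\<in>B. es j\<bar> powr q) \<le> (\<Sum>es\<in>SG m. K * (exp (l * (\<Sum>j\<in>B. es j)) + exp ((-l) * (\<Sum>j\<in>B. es j))))"
    by (intro sum_mono pt)
  also have "\<dots> = K * ((\<Sum>es\<in>SG m. exp (l * (\<Sum>j\<in>B. es j))) + (\<Sum>es\<in>SG m. exp ((-l) * (\<Sum>j\<in>B. es j))))"
    by (simp only: sum.distrib[symmetric] sum_distrib_left)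
  also have "\<dots> = K * (2 * (2^m * ((exp l + exp (-l))/2) ^ card B))"
  proof -
    have E1: "(\<Sum>es\<in>SG m. exp (l * (\<Sum>j\<in>B. es j))) = 2^m * ((exp l + exp (-l))/2) ^ card B"
      by (rule exp_sum_signs[OF B])
    have E2: "(\<Sum>es\<in>SG m. exp ((-l) * (\<Sum>j\<in>B. es j))) = 2^m * ((exp l + exp (-l))/2) ^ card B"
      using exp_sum_signs[OF B, of "-l"] by (simp add: add.commute)
    show ?thesis unfolding E1 E2 by simp
  qed
  also have "\<dots> \<le> K * (2 * (2^m * exp (l^2/2) ^ card B))"
    by (intro mult_left_mono power_mono cosh_le) (auto simp: K_def add_nonneg_nonneg)
  also have "exp (l^2/2) ^ card B = exp (q/2)"
    using b q by (simp add: exp_of_nat_mult[symmetric] l_def b_def)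
  also have "K * exp (q/2) = q powr (q/2) * exp (-q/2) * b powr (q/2)"
  proof -
    have lnl: "ln l = (ln q - ln b) / 2" using b q by (simp add: l_def ln_sqrt ln_div)
    have "q * ln (q / (exp 1 * l)) + q/2 = q * (ln q - 1 - ln l) + q/2"
      using b q l by (simp add: ln_div ln_mult)
    also have "\<dots> = (q/2) * ln q + (-q/2) + (q/2) * ln b"
      unfolding lnl by (simp add: field_simps)
    finally have "q * ln (q / (exp 1 * l)) + q/2 = (q/2) * ln q + (-q/2) + (q/2) * ln b" .
    hence "exp (q * ln (q / (exp 1 * l))) * exp (q/2) = exp ((q/2) * ln q) * exp (-q/2) * exp ((q/2) * ln b)"
      by (simp add: exp_add[symmetric])
    thus ?thesis using b q l by (simp add: K_def powr_def)
  qed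
  hence "K * (2 * (2^m * exp (q/2))) = 2^m * (2 * q powr (q/2) * exp (-q/2)) * b powr (q/2)"
    by (simp add: algebra_simps)
  finally show ?thesis by (simp add: b_def)
qed

lemma moment_Cq:
  fixes q :: real
  assumes B: "B \<subseteq> {..<m}" and q: "q > 0"
  shows "(\<Sum>es\<in>SG m. \<bar>\<Sum>j\<in>B. es j\<bar> powr q) \<le> 2^m * Cq q * real (card B) powr (q/2)"
proof -
  note moment[OF B q]
  also have "2^m * (2 * q powr (q/2) * exp (-q/2)) * real (card B) powr (q/2) \<le> 2^m * Cq q * real (card B) powr (q/2)"
    using Cq_ge[OF q] by (intro mult_right_mono mult_left_mono) auto
  finally show ?thesis .
qed

lemma jensen_concave:
  assumes E: "finite E" and F: "\<forall>e\<in>E. F e \<ge> 0" and S: "(\<Sum>e\<in>E. F e) \<le> real (card E) * B"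
    and B: "B > 0" and r: "0 \<le> r" "r \<le> 1"
  shows "(\<Sum>e\<in>E. F e powr r) \<le> real (card E) * B powr r"
proof -
  have tan: "a powr r \<le> B powr r * (1 + r * (a / B - 1))" if a: "a \<ge> 0" for a
  proof (cases "a = 0")
    case True thus ?thesis using B r by simp
  next
    case False
    hence a': "a / B > 0" using a B by simp
    have "(a/B) powr r * 1 powr (1 - r) \<le> r * (a/B) + (1 - r) * 1"
      by (rule Youngs_inequality_0) (use r a' in auto)
    hence "(a/B) powr r \<le> 1 + r * (a / B - 1)" by (simp add: algebra_simps)
    hence "B powr r * (a/B) powr r \<le> B powr r * (1 + r * (a / B - 1))" by (intro mult_left_mono) auto
    moreover have "B powr r * (a/B) powr r = a powr r" using B a by (simp add: powr_mult[symmetric])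
    ultimately show ?thesis by simp
  qed
  have "(\<Sum>e\<in>E. F e powr r) \<le> (\<Sum>e\<in>E. B powr r * (1 + r * (F e / B - 1)))"
    using F by (intro sum_mono tan) auto
  also have "\<dots> = B powr r * (real (card E) + r * ((\<Sum>e\<in>E. F e) / B - real (card E)))"
    by (simp add: sum_distrib_left sum.distrib sum_subtractf sum_divide_distrib[symmetric] algebra_simps)
  also have "\<dots> \<le> B powr r * real (card E)"
  proof -
    have "(\<Sum>e\<in>E. F e) / B \<le> real (card E)" using S B by (simp add: divide_le_eq mult.commute)
    hence "r * ((\<Sum>e\<in>E. F e) / B - real (card E)) \<le> 0" using r by (simp add: mult_nonneg_nonpos)
    thus ?thesis by (intro mult_left_mono) auto
  qed
  finally show ?thesis by (simp add: mult.commute)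
qed

lemma jensen_convex:
  assumes I: "finite I" "card I > 0" and F: "\<forall>i\<in>I. F i \<ge> 0" and r: "r \<ge> 1"
  shows "(\<Sum>i\<in>I. F i) powr r \<le> real (card I) powr (r - 1) * (\<Sum>i\<in>I. F i powr r)"
proof -
  define n where "n = real (card I)"
  have n: "n > 0" using I by (simp add: n_def)
  define M where "M = (\<Sum>i\<in>I. F i) / n"
  have M0: "M \<ge> 0" using F n by (simp add: M_def sum_nonneg)
  show ?thesis
  proof (cases "M = 0")
    case True
    hence "(\<Sum>i\<in>I. F i) = 0" using n by (simp add: M_def)
    thus ?thesis using F by (simp add: sum_nonneg)
  next
    case False
    hence M: "M > 0" using M0 by simp
    have tan: "M powr r * (1 + r * (a / M - 1)) \<le> a powr r" if a: "a \<ge> 0" for a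
    proof (cases "a = 0")
      case True
      have "1 + r * (0 / M - 1) \<le> 0" using r by simp
      hence "M powr r * (1 + r * (0 / M - 1)) \<le> 0" by (simp add: mult_nonneg_nonpos)
      thus ?thesis using True by simp
    next
      case False
      hence a': "(a / M) powr r > 0" using a M by simp
      have "((a/M) powr r) powr (1/r) * 1 powr (1 - 1/r) \<le> (1/r) * ((a/M) powr r) + (1 - 1/r) * 1"
        by (rule Youngs_inequality_0) (use r a' in auto)
      moreover have "((a/M) powr r) powr (1/r) = a / M" using r a M by (simp add: powr_powr)
      ultimately have "a / M \<le> (1/r) * ((a/M) powr r) + (1 - 1/r)" by simp
      hence "r * (a / M) \<le> r * ((1/r) * ((a/M) powr r) + (1 - 1/r))" using r by (intro mult_left_mono) auto
      also have "\<dots> = (a/M) powr r + r - 1" using r by (simp add: field_simps)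
      finally have "1 + r * (a / M - 1) \<le> (a/M) powr r" by (simp add: algebra_simps)
      hence "M powr r * (1 + r * (a / M - 1)) \<le> M powr r * (a/M) powr r" by (intro mult_left_mono) auto
      moreover have "M powr r * (a/M) powr r = a powr r" using M a by (simp add: powr_mult[symmetric])
      ultimately show ?thesis by simp
    qed
    have "(\<Sum>i\<in>I. M powr r * (1 + r * (F i / M - 1))) \<le> (\<Sum>i\<in>I. F i powr r)"
      using F by (intro sum_mono tan) auto
    moreover have "(\<Sum>i\<in>I. M powr r * (1 + r * (F i / M - 1))) = M powr r * n"
    proof -
      have "(\<Sum>i\<in>I. M powr r * (1 + r * (F i / M - 1))) = M powr r * (n + r * ((\<Sum>i\<in>I. F i) / M - n))"
        by (simp add: sum_distrib_left sum.distrib sum_subtractf sum_divide_distrib[symmetric] algebra_simps n_def)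
      also have "(\<Sum>i\<in>I. F i) / M = n"
      proof -
        have "(\<Sum>i\<in>I. F i) \<noteq> 0" using M by (auto simp: M_def)
        thus ?thesis using n by (simp add: M_def)
      qed
      finally show ?thesis by simp
    qed
    ultimately have le: "M powr r * n \<le> (\<Sum>i\<in>I. F i powr r)" by simp
    have "(\<Sum>i\<in>I. F i) powr r = (n * M) powr r" using n by (simp add: M_def)
    also have "\<dots> = n powr (r - 1) * (n * M powr r)"
      using n M by (simp add: powr_mult powr_diff)
    also have "\<dots> \<le> n powr (r - 1) * (\<Sum>i\<in>I. F i powr r)"
      using le by (intro mult_left_mono) (auto simp: mult.commute)
    finally show ?thesis by (simp add: n_def)
  qed
qed

lemma superadd:
  fixes k :: "nat \<Rightarrow> real"
  assumes k: "\<forall>i\<in>I. k i \<ge> 0" and s: "s \<ge> 1" and I: "finite I"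
  shows "(\<Sum>i\<in>I. k i powr s) \<le> (\<Sum>i\<in>I. k i) powr s"
proof -
  define S where "S = (\<Sum>i\<in>I. k i)"
  have S0: "S \<ge> 0" using k by (simp add: S_def sum_nonneg)
  have "k i powr s \<le> k i * S powr (s - 1)" if i: "i \<in> I" for i
  proof (cases "k i = 0")
    case True thus ?thesis using s by simp
  next
    case False
    hence ki: "k i > 0" using k i by force
    have kS: "k i \<le> S" unfolding S_def using k i I by (intro member_le_sum) auto
    have "k i powr s = k i * k i powr (s - 1)" using ki by (simp add: powr_diff field_simps)
    also have "\<dots> \<le> k i * S powr (s - 1)" using kS ki s by (intro mult_left_mono powr_mono2) auto
    finally show ?thesis .
  qed
  hence "(\<Sum>i\<in>I. k i powr s) \<le> (\<Sum>i\<in>I. k i * S powr (s - 1))" by (intro sum_mono)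
  also have "\<dots> = S * S powr (s - 1)" by (simp add: S_def sum_distrib_right)
  also have "\<dots> = S powr s"
  proof (cases "S = 0")
    case True thus ?thesis using s by simp
  next
    case False thus ?thesis using S0 by (simp add: powr_diff field_simps)
  qed
  finally show ?thesis by (simp add: S_def)
qed



lemma vec_lemma:
  fixes b :: "nat list" and x :: "nat \<Rightarrow> nat \<Rightarrow> real" and g :: "nat \<Rightarrow> real"
  assumes b: "length b = m" "set b \<subseteq> {..<n}"
  shows "(\<lambda>t. \<Sum>j<m. (es j * g (b!j)) * (map x b ! j) t) =
         (\<lambda>t. \<Sum>i<n. (g i * (\<Sum>j\<in>{j. j < m \<and> b!j = i}. es j)) * x i t)"
proof (rule ext)
  fix t
  have "(\<Sum>j<m. (es j * g (b!j)) * (map x b ! j) t) = (\<Sum>j<m. es j * g (b!j) * x (b!j) t)"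
    using b by (intro sum.cong) auto
  also have "\<dots> = (\<Sum>i<n. \<Sum>j\<in>{j\<in>{..<m}. b!j = i}. es j * g (b!j) * x (b!j) t)"
    by (rule sum.group[of "{..<m}" "{..<n}" "\<lambda>j. b!j", symmetric]) (use b nth_mem in \<open>fastforce+\<close>)
  also have "\<dots> = (\<Sum>i<n. (g i * (\<Sum>j\<in>{j. j < m \<and> b!j = i}. es j)) * x i t)"
  proof (intro sum.cong refl)
    fix i
    have "(\<Sum>j\<in>{j\<in>{..<m}. b!j = i}. es j * g (b!j) * x (b!j) t) = (\<Sum>j\<in>{j. j < m \<and> b!j = i}. g i * x i t * es j)"
      by (intro sum.cong) auto
    also have "\<dots> = g i * x i t * (\<Sum>j\<in>{j. j < m \<and> b!j = i}. es j)" by (simp add: sum_distrib_left)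
    finally show "(\<Sum>j\<in>{j\<in>{..<m}. b!j = i}. es j * g (b!j) * x (b!j) t) = (g i * (\<Sum>j\<in>{j. j < m \<and> b!j = i}. es j)) * x i t"
      by (simp add: mult_ac)
  qed
  finally show "(\<Sum>j<m. (es j * g (b!j)) * (map x b ! j) t) = (\<Sum>i<n. (g i * (\<Sum>j\<in>{j. j < m \<and> b!j = i}. es j)) * x i t)" .
qed

lemma main_bound:
  fixes b :: "nat list" and x :: "nat \<Rightarrow> nat \<Rightarrow> real" and g :: "nat \<Rightarrow> real"
  assumes MLin: "multilinear_lp p m L" and SYM: "symmetric_lp p m L" and CONT: "continuous_lp p m L"
    and p: "1 \<le> p" and m: "m \<ge> 1"
    and b: "length b = m" "set b \<subseteq> {..<n}" and x: "\<forall>i<n. in_lp p (x i)"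
  shows "2^m * fact m * \<bar>prod_list (map g b)\<bar> * \<bar>L (map x b)\<bar> \<le>
    poly_norm p m L * (\<Sum>es\<in>SG m. lp_norm p (\<lambda>t. \<Sum>i<n. (g i * (\<Sum>j\<in>{j. j < m \<and> b!j = i}. es j)) * x i t) ^ m)"
proof -
  define zs where "zs = map x b"
  have zs: "length zs = m" "\<forall>y\<in>set zs. in_lp p y" using b x by (auto simp: zs_def)
  define V where "V = (\<lambda>es t. \<Sum>i<n. (g i * (\<Sum>j\<in>{j. j < m \<and> b!j = i}. es j)) * x i t)"
  have V: "in_lp p (V es)" for es unfolding V_def using x by (intro in_lp_sum[OF p]) auto
  have P: "(\<Sum>es\<in>SG m. (\<Prod>j<m. es j) * L (replicate m (V es))) = 2^m * fact m * prod_list (map g b) * L zs"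
  proof -
    have "(\<Sum>es\<in>SG m. (\<Prod>j<m. es j) * L (replicate m (\<lambda>t. \<Sum>j<m. (es j * g (b!j)) * (zs!j) t))) =
        2^m * fact m * (\<Prod>j<m. g (b!j)) * L zs"
      by (rule polar[OF MLin SYM p zs])
    moreover have "(\<Prod>j<m. g (b!j)) = prod_list (map g b)" using prod_list_nth[of g b] b by simp
    ultimately show ?thesis unfolding zs_def V_def vec_lemma[OF b] by simp
  qed
  have "2^m * fact m * \<bar>prod_list (map g b)\<bar> * \<bar>L zs\<bar> = \<bar>\<Sum>es\<in>SG m. (\<Prod>j<m. es j) * L (replicate m (V es))\<bar>"
    unfolding P by (simp add: abs_mult)
  also have "\<dots> \<le> (\<Sum>es\<in>SG m. \<bar>(\<Prod>j<m. es j) * L (replicate m (V es))\<bar>)" by (rule sum_abs)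
  also have "\<dots> = (\<Sum>es\<in>SG m. \<bar>L (replicate m (V es))\<bar>)"
  proof (intro sum.cong refl)
    fix es assume es: "es \<in> SG m"
    have "\<bar>\<Prod>j<m. es j\<bar> = (\<Prod>j<m. \<bar>es j\<bar>)" by (rule abs_prod)
    also have "\<dots> = 1" using SG_abs[OF es] by (intro prod.neutral) auto
    finally show "\<bar>(\<Prod>j<m. es j) * L (replicate m (V es))\<bar> = \<bar>L (replicate m (V es))\<bar>" by (simp add: abs_mult)
  qed
  also have "\<dots> \<le> (\<Sum>es\<in>SG m. poly_norm p m L * lp_norm p (V es) ^ m)"
    by (intro sum_mono hat_bound[OF MLin CONT p m V])
  finally show ?thesis by (simp add: zs_def V_def sum_distrib_left)
qed

lemma abs_S:
  assumes es: "es \<in> SG m" and B: "B \<subseteq> {..<m}"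
  shows "\<bar>\<Sum>j\<in>B. es j\<bar> \<le> real (card B)"
proof -
  have "\<bar>\<Sum>j\<in>B. es j\<bar> \<le> (\<Sum>j\<in>B. \<bar>es j\<bar>)" by (rule sum_abs)
  also have "\<dots> = (\<Sum>j\<in>B. 1)" using SG_abs[OF es] B by (intro sum.cong) auto
  finally show ?thesis by simp
qed

lemma powr_pow_conv:
  assumes "X \<ge> 0" "q > 0" "m \<ge> 1"
  shows "(X powr (1/q)) ^ m = X powr (real m / q)"
proof (cases "X = 0")
  case True thus ?thesis using assms by (simp add: power_0_left)
next
  case False
  hence "X powr (1/q) > 0" using assms by simp
  hence "(X powr (1/q)) ^ m = (X powr (1/q)) powr real m" by (simp add: powr_realpow)
  thus ?thesis using False assms by (simp add: powr_powr)
qed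



lemma Cq_pos: "q > 0 \<Longrightarrow> Cq q > 0"
  unfolding Cq_def by simp

lemma Cq_ge1:
  assumes q: "q \<ge> 1" shows "Cq q \<ge> 1"
proof -
  have q0: "q > 0" using q by simp
  have "-ln q \<le> 1/q - 1" using ln_le_minus_one[of "1/q"] q0 by (simp add: ln_div)
  hence "q * (-ln q) \<le> q * (1/q - 1)" using q0 by (intro mult_left_mono) auto
  hence A: "q * ln q - q \<ge> -1" using q0 by (simp add: algebra_simps)
  have "exp (-1/2) \<le> exp ((q/2) * ln q + (-q/2))" using A by simp
  also have "\<dots> = q powr (q/2) * exp (-q/2)" using q0 by (simp add: powr_def mult_exp_exp algebra_simps)
  finally have B: "exp (-1/2) \<le> q powr (q/2) * exp (-q/2)" .
  have "exp (1/2::real) \<le> 2" using exp_bound_half[of "1/2::real"] by simp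
  hence "1 \<le> 2 * exp (-1/2::real)" by (simp add: exp_minus field_simps)
  also have "\<dots> \<le> 2 * (q powr (q/2) * exp (-q/2))" using B by simp
  also have "\<dots> \<le> Cq q" using Cq_ge[OF q0] by simp
  finally show ?thesis .
qed

lemma sumk_le:
  fixes k :: "nat \<Rightarrow> nat"
  assumes ks: "(\<Sum>i<n. k i) = m" and s: "s > 0" and sm: "s \<ge> 1 \<or> m \<le> 1"
  shows "(\<Sum>i<n. real (k i) powr s) \<le> real m powr s"
proof (cases "s \<ge> 1")
  case True
  have "(\<Sum>i<n. real (k i) powr s) \<le> (\<Sum>i<n. real (k i)) powr s"
    by (rule superadd) (use True in auto)
  also have "(\<Sum>i<n. real (k i)) = real m" using ks by (simp flip: of_nat_sum)
  finally show ?thesis .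
next
  case False
  hence m1: "m \<le> 1" using sm by simp
  have kle: "k i \<le> 1" if "i < n" for i
    using member_le_sum[of i "{..<n}" k] that ks m1 by simp
  have "(\<Sum>i<n. real (k i) powr s) = (\<Sum>i<n. real (k i))"
  proof (intro sum.cong refl)
    fix i assume "i \<in> {..<n}"
    hence "k i = 0 \<or> k i = 1" using kle by fastforce
    thus "real (k i) powr s = real (k i)" by auto
  qed
  also have "\<dots> = real m" using ks by (simp flip: of_nat_sum)
  also have "\<dots> \<le> real m powr s"
  proof (cases "m = 0")
    case False
    hence "m = 1" using m1 by simp
    thus ?thesis by simp
  qed simp
  finally show ?thesis .
qed

lemma moments_sum:
  fixes k :: "nat \<Rightarrow> nat"
  assumes Bk: "\<forall>i<n. Bk i \<subseteq> {..<m} \<and> card (Bk i) = k i" and ks: "(\<Sum>i<n. k i) = m"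
    and q: "q > 0" and sm: "q/2 \<ge> 1 \<or> m \<le> 1"
  shows "(\<Sum>es\<in>SG m. \<Sum>i<n. \<bar>\<Sum>j\<in>Bk i. es j\<bar> powr q) \<le> 2^m * (Cq q * real m powr (q/2))"
proof -
  have "(\<Sum>es\<in>SG m. \<Sum>i<n. \<bar>\<Sum>j\<in>Bk i. es j\<bar> powr q) = (\<Sum>i<n. \<Sum>es\<in>SG m. \<bar>\<Sum>j\<in>Bk i. es j\<bar> powr q)"
    by (rule sum.swap)
  also have "\<dots> \<le> (\<Sum>i<n. 2^m * Cq q * real (k i) powr (q/2))"
  proof (intro sum_mono)
    fix i assume "i \<in> {..<n}"
    thus "(\<Sum>es\<in>SG m. \<bar>\<Sum>j\<in>Bk i. es j\<bar> powr q) \<le> 2^m * Cq q * real (k i) powr (q/2)"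
      using moment_Cq[of "Bk i" m q] Bk q by auto
  qed
  also have "\<dots> = 2^m * Cq q * (\<Sum>i<n. real (k i) powr (q/2))" by (simp add: sum_distrib_left)
  also have "\<dots> \<le> 2^m * Cq q * real m powr (q/2)"
    using sumk_le[OF ks _ sm] q Cq_pos[OF q] by (intro mult_left_mono) auto
  finally show ?thesis by (simp add: mult.assoc)
qed

lemma T_bound_ge:
  fixes k :: "nat \<Rightarrow> nat"
  assumes Bk: "\<forall>i<n. Bk i \<subseteq> {..<m} \<and> card (Bk i) = k i" and ks: "(\<Sum>i<n. k i) = m"
    and q: "q \<ge> 1" "q \<ge> real m" and m: "m \<ge> 1"
  shows "(\<Sum>es\<in>SG m. (\<Sum>i<n. \<bar>\<Sum>j\<in>Bk i. es j\<bar> powr q) powr (real m / q)) \<le> 2^m * (Cq q * real m powr (q/2))"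
proof -
  have q0: "q > 0" using q by simp
  have sm: "q/2 \<ge> 1 \<or> m \<le> 1" using q by linarith
  define Bq where "Bq = Cq q * real m powr (q/2)"
  have Bq1: "Bq \<ge> 1"
  proof -
    have "real m powr (q/2) \<ge> 1" using m q0 by (simp add: ge_one_powr_ge_zero)
    hence "1 * 1 \<le> Cq q * real m powr (q/2)" using Cq_ge1[OF q(1)] by (intro mult_mono) auto
    thus ?thesis unfolding Bq_def by simp
  qed
  have "(\<Sum>es\<in>SG m. (\<Sum>i<n. \<bar>\<Sum>j\<in>Bk i. es j\<bar> powr q) powr (real m / q)) \<le> real (card (SG m)) * Bq powr (real m / q)"
  proof (rule jensen_concave[OF finite_SG])
    show "(\<Sum>es\<in>SG m. \<Sum>i<n. \<bar>\<Sum>j\<in>Bk i. es j\<bar> powr q) \<le> real (card (SG m)) * Bq"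
      using moments_sum[OF Bk ks q0 sm] by (simp add: card_SG Bq_def)
    show "\<forall>es\<in>SG m. 0 \<le> (\<Sum>i<n. \<bar>\<Sum>j\<in>Bk i. es j\<bar> powr q)" by (simp add: sum_nonneg)
    show "Bq > 0" using Bq1 by simp
    show "0 \<le> real m / q" using q0 by simp
    show "real m / q \<le> 1" using q0 q by (simp add: divide_le_eq)
  qed
  also have "Bq powr (real m / q) \<le> Bq powr 1"
    using Bq1 q0 q by (intro powr_mono) auto
  finally show ?thesis using Bq1 by (simp add: card_SG Bq_def)
qed

lemma T_bound_lt:
  fixes k :: "nat \<Rightarrow> nat"
  assumes Bk: "\<forall>i<n. Bk i \<subseteq> {..<m} \<and> card (Bk i) = k i" and ks: "(\<Sum>i<n. k i) = m"
    and q: "q \<ge> 1" "q < real m" and n: "n \<ge> 1"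
  shows "(\<Sum>es\<in>SG m. (\<Sum>i<n. \<bar>\<Sum>j\<in>Bk i. es j\<bar> powr q) powr (real m / q))
     \<le> 2^m * (real n powr ((real m - q) / q) * Cq (real m) * real m powr (real m / 2))"
proof -
  have q0: "q > 0" using q by simp
  have "real m > 1" using q by linarith
  hence "m \<ge> 2" by simp
  hence m2: "real m / 2 \<ge> 1" by simp
  have r: "real m / q \<ge> 1" using q q0 by (simp add: field_simps)
  have r1: "real m / q - 1 = (real m - q) / q" using q0 by (simp add: field_simps)
  have "(\<Sum>es\<in>SG m. (\<Sum>i<n. \<bar>\<Sum>j\<in>Bk i. es j\<bar> powr q) powr (real m / q))
      \<le> (\<Sum>es\<in>SG m. real n powr ((real m - q) / q) * (\<Sum>i<n. \<bar>\<Sum>j\<in>Bk i. es j\<bar> powr real m))"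
  proof (intro sum_mono)
    fix es
    have "(\<Sum>i<n. \<bar>\<Sum>j\<in>Bk i. es j\<bar> powr q) powr (real m / q)
        \<le> real (card {..<n}) powr (real m / q - 1) * (\<Sum>i<n. (\<bar>\<Sum>j\<in>Bk i. es j\<bar> powr q) powr (real m / q))"
      by (rule jensen_convex) (use n r in auto)
    also have "(\<Sum>i<n. (\<bar>\<Sum>j\<in>Bk i. es j\<bar> powr q) powr (real m / q)) = (\<Sum>i<n. \<bar>\<Sum>j\<in>Bk i. es j\<bar> powr real m)"
      using q0 by (simp add: powr_powr)
    finally show "(\<Sum>i<n. \<bar>\<Sum>j\<in>Bk i. es j\<bar> powr q) powr (real m / q)
        \<le> real n powr ((real m - q) / q) * (\<Sum>i<n. \<bar>\<Sum>j\<in>Bk i. es j\<bar> powr real m)"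
      by (simp add: r1)
  qed
  also have "\<dots> = real n powr ((real m - q) / q) * (\<Sum>es\<in>SG m. \<Sum>i<n. \<bar>\<Sum>j\<in>Bk i. es j\<bar> powr real m)"
    by (simp add: sum_distrib_left)
  also have "\<dots> \<le> real n powr ((real m - q) / q) * (2^m * (Cq (real m) * real m powr (real m / 2)))"
    using moments_sum[OF Bk ks, of "real m"] m2 q by (intro mult_left_mono) auto
  finally show ?thesis by (simp add: mult_ac)
qed



theorem mainTheorem5:
  fixes p :: ereal and m n :: nat and L :: "(nat \<Rightarrow> real) list \<Rightarrow> real"
    and x :: "nat \<Rightarrow> nat \<Rightarrow> real" and k :: "nat \<Rightarrow> nat"
  assumes "1 \<le> p" and "m \<ge> 1"
    and "multilinear_lp p m L" and "symmetric_lp p m L" and "continuous_lp p m L"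
    and "\<forall>i<n. in_lp p (x i) \<and> lp_norm p (x i) = 1"
    and "\<forall>i<n. \<forall>j<n. i \<noteq> j \<longrightarrow> supp (x i) \<inter> supp (x j) = {}"
    and "(\<Sum>i<n. k i) = m"
  shows "\<bar>L (power_tuple n x k)\<bar> / poly_norm p m L \<le> thm5_bound p m n k"
proof -
  note p1 = assms(1) and m1 = assms(2) and MLin = assms(3) and SYM = assms(4) and CONT = assms(5)
    and xn = assms(6) and disj = assms(7) and ks = assms(8)
  define b where "b = bl n k"
  have b: "length b = m" "set b \<subseteq> {..<n}" using length_bl[of n k] set_bl[of n k] ks by (auto simp: b_def)
  have x: "\<forall>i<n. in_lp p (x i)" using xn by auto
  have PT: "power_tuple n x k = map x b" by (simp add: b_def power_tuple_bl)
  define Bk where "Bk i = {j. j < m \<and> b!j = i}" for i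
  have Bk: "\<forall>i<n. Bk i \<subseteq> {..<m} \<and> card (Bk i) = k i"
    using count_bl[of _ n k] b by (auto simp: Bk_def b_def)
  define N where "N = poly_norm p m L"
  have N0: "N \<ge> 0" unfolding N_def by (rule poly_norm_nonneg[OF MLin CONT p1 m1])
  define LZ where "LZ = \<bar>L (map x b)\<bar>"
  have n1: "n \<ge> 1"
  proof (rule ccontr)
    assume "\<not> n \<ge> 1" hence "n = 0" by simp
    thus False using ks m1 by simp
  qed
  have MB: "2^m * fact m * \<bar>prod_list (map g b)\<bar> * LZ \<le>
    N * (\<Sum>es\<in>SG m. lp_norm p (\<lambda>t. \<Sum>i<n. (g i * (\<Sum>j\<in>Bk i. es j)) * x i t) ^ m)" for g
    using main_bound[OF MLin SYM CONT p1 m1 b x, of g] by (simp add: N_def LZ_def Bk_def)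

  define P where "P = (\<Prod>i<n. real (k i) ^ k i)"
  have Ppos: "P > 0" unfolding P_def
  proof (intro prod_pos)
    fix i show "0 < real (k i) ^ k i" by (cases "k i = 0") auto
  qed
  define F1 where "F1 = (if p = \<infinity> then 1 else real n powr (real m / real_of_ereal p))"
  define g1 where "g1 i = 1 / real (k i)" for i
  have prod_g1: "prod_list (map g1 b) = 1 / P"
    by (simp add: b_def prod_bl g1_def P_def power_one_over prod_dividef)
  have a1: "\<bar>g1 i * (\<Sum>j\<in>Bk i. es j)\<bar> \<le> 1" if es: "es \<in> SG m" and i: "i < n" for es i
  proof (cases "k i = 0")
    case True thus ?thesis by (simp add: g1_def)
  next
    case False
    have "\<bar>\<Sum>j\<in>Bk i. es j\<bar> \<le> real (k i)" using abs_S[OF es, of "Bk i"] Bk i by auto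
    thus ?thesis using False by (simp add: g1_def abs_mult divide_le_eq)
  qed
  have norm1: "lp_norm p (\<lambda>t. \<Sum>i<n. (g1 i * (\<Sum>j\<in>Bk i. es j)) * x i t) ^ m \<le> F1" if es: "es \<in> SG m" for es
  proof (cases "p = \<infinity>")
    case True
    have "in_lp p (\<lambda>t. \<Sum>i<n. (g1 i * (\<Sum>j\<in>Bk i. es j)) * x i t)"
         "lp_norm p (\<lambda>t. \<Sum>i<n. (g1 i * (\<Sum>j\<in>Bk i. es j)) * x i t) \<le> 1"
      using lp_disj_inf[OF True xn disj] a1[OF es] by auto
    thus ?thesis using True lp_norm_nonneg by (simp add: F1_def power_le_one)
  next
    case False
    define q where "q = real_of_ereal p"
    have q: "q \<ge> 1" using p_finite[OF p1 False] q_def by simp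
    have "lp_norm p (\<lambda>t. \<Sum>i<n. (g1 i * (\<Sum>j\<in>Bk i. es j)) * x i t) ^ m =
        ((\<Sum>i<n. \<bar>g1 i * (\<Sum>j\<in>Bk i. es j)\<bar> powr q) powr (1/q)) ^ m"
      using lp_disj_finite(2)[OF p1 False xn disj] by (simp add: q_def)
    also have "\<dots> = (\<Sum>i<n. \<bar>g1 i * (\<Sum>j\<in>Bk i. es j)\<bar> powr q) powr (real m / q)"
      using q m1 by (intro powr_pow_conv) (auto intro: sum_nonneg)
    also have "\<dots> \<le> real n powr (real m / q)"
    proof (intro powr_mono2)
      have "(\<Sum>i<n. \<bar>g1 i * (\<Sum>j\<in>Bk i. es j)\<bar> powr q) \<le> (\<Sum>i<n. 1)"
      proof (intro sum_mono)
        fix i assume "i \<in> {..<n}"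
        hence "\<bar>g1 i * (\<Sum>j\<in>Bk i. es j)\<bar> powr q \<le> 1 powr q" using a1[OF es] q by (intro powr_mono2) auto
        thus "\<bar>g1 i * (\<Sum>j\<in>Bk i. es j)\<bar> powr q \<le> 1" by simp
      qed
      thus "(\<Sum>i<n. \<bar>g1 i * (\<Sum>j\<in>Bk i. es j)\<bar> powr q) \<le> real n" by simp
    qed (use q in \<open>auto intro: sum_nonneg\<close>)
    finally show ?thesis using False by (simp add: F1_def q_def)
  qed
  have "2^m * fact m * (1 / P) * LZ \<le> N * (\<Sum>es\<in>SG m. F1)"
  proof -
    have "2^m * fact m * \<bar>1 / P\<bar> * LZ \<le> N * (\<Sum>es\<in>SG m. lp_norm p (\<lambda>t. \<Sum>i<n. (g1 i * (\<Sum>j\<in>Bk i. es j)) * x i t) ^ m)"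
      using MB[of g1] by (simp add: prod_g1)
    also have "\<dots> \<le> N * (\<Sum>es\<in>SG m. F1)" using N0 norm1 by (intro mult_left_mono sum_mono) auto
    finally show ?thesis using Ppos by simp
  qed
  hence "2^m * (fact m * (1 / P) * LZ) \<le> 2^m * (N * F1)" by (simp add: card_SG mult_ac)
  hence "fact m * (1 / P) * LZ \<le> N * F1" by (rule mult_left_le_imp_le) simp
  hence B1: "LZ \<le> N * (P / fact m * F1)" using Ppos by (simp add: field_simps)

  have B2: "LZ \<le> N * (if real_of_ereal p \<ge> real m
          then real_of_ereal p * 2 powr (real_of_ereal p/2) * Gamma (real_of_ereal p/2) * real m powr (real_of_ereal p/2) / fact m
          else real n powr ((real m - real_of_ereal p) / real_of_ereal p) * real m * 2 powr (real m / 2)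
                     * Gamma (real m / 2) * real m powr (real m / 2) / fact m)" if fin: "p \<noteq> \<infinity>"
  proof -
    define q where "q = real_of_ereal p"
    have q: "q \<ge> 1" using p_finite[OF p1 fin] q_def by simp
    define T where "T = (\<Sum>es\<in>SG m. (\<Sum>i<n. \<bar>\<Sum>j\<in>Bk i. es j\<bar> powr q) powr (real m / q))"
    have "2^m * fact m * LZ \<le> N * T"
    proof -
      have "2^m * fact m * \<bar>prod_list (map (\<lambda>_. 1::real) b)\<bar> * LZ \<le>
          N * (\<Sum>es\<in>SG m. lp_norm p (\<lambda>t. \<Sum>i<n. (1 * (\<Sum>j\<in>Bk i. es j)) * x i t) ^ m)"
        by (rule MB)
      moreover have "(\<Sum>es\<in>SG m. lp_norm p (\<lambda>t. \<Sum>i<n. (1 * (\<Sum>j\<in>Bk i. es j)) * x i t) ^ m) = T"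
        unfolding T_def
      proof (intro sum.cong refl)
        fix es
        have "lp_norm p (\<lambda>t. \<Sum>i<n. (1 * (\<Sum>j\<in>Bk i. es j)) * x i t) ^ m =
            ((\<Sum>i<n. \<bar>1 * (\<Sum>j\<in>Bk i. es j)\<bar> powr q) powr (1/q)) ^ m"
          using lp_disj_finite(2)[OF p1 fin xn disj] by (simp add: q_def)
        also have "\<dots> = (\<Sum>i<n. \<bar>\<Sum>j\<in>Bk i. es j\<bar> powr q) powr (real m / q)"
          using q m1 by (simp add: powr_pow_conv sum_nonneg)
        finally show "lp_norm p (\<lambda>t. \<Sum>i<n. (1 * (\<Sum>j\<in>Bk i. es j)) * x i t) ^ m =
            (\<Sum>i<n. \<bar>\<Sum>j\<in>Bk i. es j\<bar> powr q) powr (real m / q)" .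
      qed
      moreover have "prod_list (map (\<lambda>_. 1::real) b) = 1" by (induction b) auto
      ultimately show ?thesis by simp
    qed
    moreover have "T \<le> 2^m * (if q \<ge> real m then Cq q * real m powr (q/2)
        else real n powr ((real m - q) / q) * Cq (real m) * real m powr (real m / 2))"
    proof (cases "q \<ge> real m")
      case True thus ?thesis unfolding T_def using T_bound_ge[OF Bk ks q True m1] by simp
    next
      case False thus ?thesis unfolding T_def using T_bound_lt[OF Bk ks q _ n1] by simp
    qed
    ultimately have "2^m * fact m * LZ \<le> N * (2^m * (if q \<ge> real m then Cq q * real m powr (q/2)
        else real n powr ((real m - q) / q) * Cq (real m) * real m powr (real m / 2)))"
      using N0 by (meson mult_left_mono order_trans)
    hence "2^m * (fact m * LZ) \<le> 2^m * (N * (if q \<ge> real m then Cq q * real m powr (q/2)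
        else real n powr ((real m - q) / q) * Cq (real m) * real m powr (real m / 2)))"
      by (simp add: mult_ac)
    hence "fact m * LZ \<le> N * (if q \<ge> real m then Cq q * real m powr (q/2)
        else real n powr ((real m - q) / q) * Cq (real m) * real m powr (real m / 2))"
      by simp
    hence "LZ \<le> N * (if q \<ge> real m then Cq q * real m powr (q/2)
        else real n powr ((real m - q) / q) * Cq (real m) * real m powr (real m / 2)) / fact m"
      by (simp add: field_simps)
    thus ?thesis unfolding q_def Cq_def by (cases "real m \<le> real_of_ereal p") (auto simp: ac_simps)
  qed

  have Pnat: "real (\<Prod>i<n. k i ^ k i) = P" by (simp add: P_def)
  have Bound: "LZ \<le> N * thm5_bound p m n k"
  proof (cases "p = \<infinity>")
    case True thus ?thesis using B1 unfolding P_def by (simp add: thm5_bound_def F1_def)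
  next
    case False
    define S where "S = (if real_of_ereal p \<ge> real m
          then real_of_ereal p * 2 powr (real_of_ereal p/2) * Gamma (real_of_ereal p/2) * real m powr (real_of_ereal p/2) / fact m
          else real n powr ((real m - real_of_ereal p) / real_of_ereal p) * real m * 2 powr (real m / 2)
                     * Gamma (real m / 2) * real m powr (real m / 2) / fact m)"
    have eq: "thm5_bound p m n k = min (P / fact m * F1) S"
      unfolding thm5_bound_def Let_def S_def F1_def P_def using False by simp
    have "LZ \<le> N * (P / fact m * F1)" by (rule B1)
    moreover have "LZ \<le> N * S" unfolding S_def by (rule B2[OF False])
    ultimately show ?thesis unfolding eq by (simp add: min_def)
  qed
  have bnd0: "thm5_bound p m n k \<ge> 0"
  proof -
    have f: "P / fact m * F1 \<ge> 0" using Ppos by (simp add: F1_def)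
    have "real_of_ereal p * 2 powr (real_of_ereal p/2) * Gamma (real_of_ereal p/2) * real m powr (real_of_ereal p/2) / fact m \<ge> 0"
      if "p \<noteq> \<infinity>"
      using p_finite[OF p1 that] by (intro divide_nonneg_pos mult_nonneg_nonneg) (auto intro: less_imp_le)
    moreover have "real n powr ((real m - real_of_ereal p) / real_of_ereal p) * real m * 2 powr (real m / 2)
                     * Gamma (real m / 2) * real m powr (real m / 2) / fact m \<ge> 0"
      using m1 by (intro divide_nonneg_pos mult_nonneg_nonneg) (auto intro: less_imp_le)
    ultimately show ?thesis using f unfolding P_def
      by (auto simp: thm5_bound_def Let_def F1_def)
  qed
  show ?thesis
  proof (cases "N = 0")
    case True thus ?thesis using bnd0 by (simp add: N_def)
  next
    case False
    hence "N > 0" using N0 by simp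
    thus ?thesis using Bound by (simp add: PT LZ_def N_def[symmetric] divide_le_eq mult.commute)
  qed
qed

end
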